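(* In the insurance game built on any stag hunt, the profile $A^n$ is the unique weakly maximal state and the unique strongly maximal state; in particular the insurance game is weakly acyclic.
   Context: A stag hunt has players $I=\{1,\dots,n\}$ with strategies $\{A,D\}$, a constant $c\in\mathbb{R}$ and, for each $i$, a function $f_i$ on subsets $T\subseteq I$ with $i\in T$, strictly increasing with respect to inclusion, with $f_i(I)>c$ and $f_i(\{i\})<c$; an adopter gets $f_i(T)$ where $T$ is the set of adopters, and a defector gets $c$. The insurance game built on it has players $I$, each with strategies $\{A,D,X\}$. For a profile $s$ let $T(s)=\{j: s_j\in\{A,X\}\}$. Each player $i$ has premium $\pi_i>0$ and reimbursement $R_i$; payoffs are $u_i(s)=c$ if $s_i=D$; $f_i(T(s))$ if $s_i=A$; $f_i(T(s))-\pi_i+R_i\cdot\mathbf{1}[T(s)\neq I]$ if $s_i=X$; with $\pi_i<f_i(I)-c$ and $f_i(T)-\pi_i+R_i>c$ for all $T$ with $i\in T\neq I$. For a profile $s$, $(s_i',s_{-i})$ is $s$ with player $i$'s strategy replaced by $s_i'$. A pure Nash equilibrium is $s$ with $u_i(s)\ge u_i(s_i',s_{-i})$ for all $i,s_i'$. The strict deployment graph has vertex set the profiles and an arc $(s,s')$ iff $s'=(s_i',s_{-i})$ for some $i$ with $u_i(s')>u_i(s)$; the ordinal deployment graph has an arc $(s,s')$, $s'\neq s$, iff $s'=(s_i',s_{-i})$ for some $i$ with $u_i(s')\ge u_i(s)$. For either graph define $s\succeq s'$ iff there is a directed path (possibly of length $0$) from $s'$ to $s$, and $s\succ s'$ iff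 $s\succeq s'$ and not $s'\succeq s$; $s^*$ is maximal if no $s$ satisfies $s\succ s^*$. Weakly (resp. strongly) maximal states are maximal states for the strict (resp. ordinal) deployment graph. A game is weakly acyclic if all its weakly maximal states are pure Nash equilibria. *)

theory Defs
  imports Complex_Main
begin

text \<open>Players form a finite type 'i (the player set I is UNIV). Profiles are
functions from players to strategies; every player may use every strategy of the
strategy type.\<close>

datatype strat = A | D | X

text \<open>Stag hunt: f i T is the adopter payoff of player i when T is the adopter set
(only meaningful for i in T).\<close>
definition stag_hunt :: "real \<Rightarrow> ('i::finite \<Rightarrow> 'i set \<Rightarrow> real) \<Rightarrow> bool" where
  "stag_hunt c f \<longleftrightarrow>
     (\<forall>i T T'. i \<in> T \<longrightarrow> T \<subset> T' \<longrightarrow> f i T < f i T') \<and>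
     (\<forall>i. f i UNIV > c) \<and> (\<forall>i. f i {i} < c)"

definition adopters :: "('i \<Rightarrow> strat) \<Rightarrow> 'i set" where
  "adopters s = {j. s j = A \<or> s j = X}"

definition ins_payoff ::
  "real \<Rightarrow> ('i::finite \<Rightarrow> 'i set \<Rightarrow> real) \<Rightarrow> ('i \<Rightarrow> real) \<Rightarrow> ('i \<Rightarrow> real)
     \<Rightarrow> ('i \<Rightarrow> strat) \<Rightarrow> 'i \<Rightarrow> real" where
  "ins_payoff c f \<pi> R s i =
     (case s i of
        D \<Rightarrow> c
      | A \<Rightarrow> f i (adopters s)
      | X \<Rightarrow> f i (adopters s) - \<pi> i + (if adopters s \<noteq> UNIV then R i else 0))"

definition insurance_params ::
  "real \<Rightarrow> ('i::finite \<Rightarrow> 'i set \<Rightarrow> real) \<Rightarrow> ('i \<Rightarrow> real) \<Rightarrow> ('i \<Rightarrow> real) \<Rightarrow> bool" where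
  "insurance_params c f \<pi> R \<longleftrightarrow>
     (\<forall>i. \<pi> i > 0) \<and> (\<forall>i. \<pi> i < f i UNIV - c) \<and>
     (\<forall>i T. i \<in> T \<longrightarrow> T \<noteq> UNIV \<longrightarrow> f i T - \<pi> i + R i > c)"

definition pure_nash :: "(('i \<Rightarrow> 's) \<Rightarrow> 'i \<Rightarrow> real) \<Rightarrow> ('i \<Rightarrow> 's) \<Rightarrow> bool" where
  "pure_nash u s \<longleftrightarrow> (\<forall>i a. u s i \<ge> u (s(i := a)) i)"

definition strict_arc :: "(('i \<Rightarrow> 's) \<Rightarrow> 'i \<Rightarrow> real) \<Rightarrow> ('i \<Rightarrow> 's) \<Rightarrow> ('i \<Rightarrow> 's) \<Rightarrow> bool" where
  "strict_arc u s s' \<longleftrightarrow> (\<exists>i a. s' = s(i := a) \<and> u s' i > u s i)"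

definition ordinal_arc :: "(('i \<Rightarrow> 's) \<Rightarrow> 'i \<Rightarrow> real) \<Rightarrow> ('i \<Rightarrow> 's) \<Rightarrow> ('i \<Rightarrow> 's) \<Rightarrow> bool" where
  "ordinal_arc u s s' \<longleftrightarrow> s' \<noteq> s \<and> (\<exists>i a. s' = s(i := a) \<and> u s' i \<ge> u s i)"

definition geq_in :: "('p \<Rightarrow> 'p \<Rightarrow> bool) \<Rightarrow> 'p \<Rightarrow> 'p \<Rightarrow> bool" where
  "geq_in E s s' \<longleftrightarrow> E\<^sup>*\<^sup>* s' s"

definition gt_in :: "('p \<Rightarrow> 'p \<Rightarrow> bool) \<Rightarrow> 'p \<Rightarrow> 'p \<Rightarrow> bool" where
  "gt_in E s s' \<longleftrightarrow> geq_in E s s' \<and> \<not> geq_in E s' s"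

definition maximal_in :: "('p \<Rightarrow> 'p \<Rightarrow> bool) \<Rightarrow> 'p \<Rightarrow> bool" where
  "maximal_in E s0 \<longleftrightarrow> \<not> (\<exists>s. gt_in E s s0)"

definition weakly_maximal :: "(('i \<Rightarrow> 's) \<Rightarrow> 'i \<Rightarrow> real) \<Rightarrow> ('i \<Rightarrow> 's) \<Rightarrow> bool" where
  "weakly_maximal u s \<longleftrightarrow> maximal_in (strict_arc u) s"

definition strongly_maximal :: "(('i \<Rightarrow> 's) \<Rightarrow> 'i \<Rightarrow> real) \<Rightarrow> ('i \<Rightarrow> 's) \<Rightarrow> bool" where
  "strongly_maximal u s \<longleftrightarrow> maximal_in (ordinal_arc u) s"

definition weakly_acyclic :: "(('i \<Rightarrow> 's) \<Rightarrow> 'i \<Rightarrow> real) \<Rightarrow> bool" where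
  "weakly_acyclic u \<longleftrightarrow> (\<forall>s. weakly_maximal u s \<longrightarrow> pure_nash u s)"

end

theory Submission
  imports Defs
begin

lemma adopters_upd: "adopters (s(i := b)) = (if b = D then adopters s - {i} else insert i (adopters s))"
  by (cases b) (auto simp: adopters_def)

lemma adopters_all: "(\<forall>j. s j \<noteq> D) \<Longrightarrow> adopters s = UNIV"
  unfolding adopters_def by (auto intro: strat.exhaust)

lemma upd_AA[simp]: "(\<lambda>_. A)(i := A) = (\<lambda>_. A)"
  by (rule ext) simp

lemma reach_A:
  fixes c :: real and f :: "'i::finite \<Rightarrow> 'i set \<Rightarrow> real" and \<pi> R :: "'i \<Rightarrow> real"
  assumes ip: "insurance_params c f \<pi> R"
  shows "(strict_arc (ins_payoff c f \<pi> R))\<^sup>*\<^sup>* s (\<lambda>_. A)"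
proof (induction s rule: measure_induct_rule[where f="\<lambda>s. 2 * card {j. s j = D} + card {j. s j = X}"])
  case (less s)
  let ?u = "ins_payoff c f \<pi> R"
  show ?case
  proof (cases "\<exists>i. s i = D")
    case True
    then obtain i where si: "s i = D" by blast
    let ?s' = "s(i := X)"
    have arc: "strict_arc ?u s ?s'"
    proof -
      have ad: "adopters ?s' = insert i (adopters s)" by (simp add: adopters_upd)
      have "?u ?s' i > c"
      proof (cases "adopters ?s' = UNIV")
        case True
        then have "?u ?s' i = f i UNIV - \<pi> i" unfolding ins_payoff_def by simp
        moreover have "\<pi> i < f i UNIV - c" using ip unfolding insurance_params_def by blast
        ultimately show ?thesis by linarith
      next
        case False
        have "f i (adopters ?s') - \<pi> i + R i > c" using ip False ad unfolding insurance_params_def by blast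
        then show ?thesis using False unfolding ins_payoff_def by simp
      qed
      moreover have "?u s i = c" using si unfolding ins_payoff_def by simp
      ultimately have "?u ?s' i > ?u s i" by linarith
      then show ?thesis unfolding strict_arc_def by blast
    qed
    have d: "{j. ?s' j = D} = {j. s j = D} - {i}" by auto
    have x: "{j. ?s' j = X} = insert i {j. s j = X}" by auto
    have "card {j. ?s' j = D} = card {j. s j = D} - 1" using d si by (simp add: card_Diff_singleton)
    moreover have "card {j. ?s' j = X} = card {j. s j = X} + 1" using x si by (simp add: card_insert_if)
    moreover have "card {j. s j = D} > 0" using si by (auto simp: card_gt_0_iff)
    ultimately have "2 * card {j. ?s' j = D} + card {j. ?s' j = X} < 2 * card {j. s j = D} + card {j. s j = X}" by linarith
    then have "(strict_arc ?u)\<^sup>*\<^sup>* ?s' (\<lambda>_. A)" by (rule less.IH)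
    with arc show ?thesis by (rule converse_rtranclp_into_rtranclp)
  next
    case noD: False
    show ?thesis
    proof (cases "\<exists>i. s i = X")
      case True
      then obtain i where si: "s i = X" by blast
      let ?s' = "s(i := A)"
      have nd: "\<forall>j. s j \<noteq> D" using noD by simp
      have ad1: "adopters s = UNIV" using nd by (rule adopters_all)
      have nd2: "\<forall>j. ?s' j \<noteq> D" using nd by simp
      have ad2: "adopters ?s' = UNIV" using nd2 by (rule adopters_all)
      have arc: "strict_arc ?u s ?s'"
      proof -
        have "?u s i = f i UNIV - \<pi> i" using si ad1 unfolding ins_payoff_def by simp
        moreover have "?u ?s' i = f i UNIV" using ad2 unfolding ins_payoff_def by simp
        moreover have "\<pi> i > 0" using ip unfolding insurance_params_def by blast
        ultimately have "?u ?s' i > ?u s i" by linarith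
        then show ?thesis unfolding strict_arc_def by blast
      qed
      have d: "{j. ?s' j = D} = {j. s j = D}" using si by auto
      have x: "{j. ?s' j = X} = {j. s j = X} - {i}" by auto
      have "card {j. ?s' j = X} < card {j. s j = X}" unfolding x
        by (rule card_Diff1_less) (use si in auto)
      then have "2 * card {j. ?s' j = D} + card {j. ?s' j = X} < 2 * card {j. s j = D} + card {j. s j = X}" unfolding d by linarith
      then have "(strict_arc ?u)\<^sup>*\<^sup>* ?s' (\<lambda>_. A)" by (rule less.IH)
      with arc show ?thesis by (rule converse_rtranclp_into_rtranclp)
    next
      case False
      have "s = (\<lambda>_. A)"
      proof (rule ext)
        fix j show "s j = A" using noD False by (cases "s j") auto
      qed
      then show ?thesis by simp
    qed
  qed
qed

lemma A_payoffs:
  assumes sh: "stag_hunt c f" and ip: "insurance_params c f \<pi> R"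
  shows "b \<noteq> A \<Longrightarrow> ins_payoff c f \<pi> R ((\<lambda>_. A)(i := b)) i < ins_payoff c f \<pi> R (\<lambda>_. A) i"
proof -
  assume b: "b \<noteq> A"
  have ad: "adopters (\<lambda>_::'a. A) = UNIV" by (simp add: adopters_def)
  have "f i UNIV > c" using sh unfolding stag_hunt_def by blast
  moreover have "\<pi> i > 0" using ip unfolding insurance_params_def by blast
  moreover have "adopters ((\<lambda>_. A)(i := X)) = UNIV" by (simp add: adopters_upd ad)
  ultimately show ?thesis using b ad by (cases b) (auto simp: ins_payoff_def)
qed

lemma no_arc_strict:
  assumes "stag_hunt c f" "insurance_params c f \<pi> R"
  shows "\<not> strict_arc (ins_payoff c f \<pi> R) (\<lambda>_. A) s'"
proof
  assume "strict_arc (ins_payoff c f \<pi> R) (\<lambda>_. A) s'"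
  then obtain i b where e: "s' = (\<lambda>_. A)(i := b)" and g: "ins_payoff c f \<pi> R s' i > ins_payoff c f \<pi> R (\<lambda>_. A) i"
    unfolding strict_arc_def by blast
  show False
  proof (cases "b = A")
    case True then show False using e g by simp
  next
    case False then show False using A_payoffs[OF assms False, of i] e g by simp
  qed
qed

lemma no_arc_ord:
  assumes "stag_hunt c f" "insurance_params c f \<pi> R"
  shows "\<not> ordinal_arc (ins_payoff c f \<pi> R) (\<lambda>_. A) s'"
proof
  assume "ordinal_arc (ins_payoff c f \<pi> R) (\<lambda>_. A) s'"
  then obtain i b where n: "s' \<noteq> (\<lambda>_. A)" and e: "s' = (\<lambda>_. A)(i := b)" and g: "ins_payoff c f \<pi> R s' i \<ge> ins_payoff c f \<pi> R (\<lambda>_. A) i"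
    unfolding ordinal_arc_def by blast
  show False
  proof (cases "b = A")
    case True then show False using e n by simp
  next
    case False then show False using A_payoffs[OF assms False, of i] e g by simp
  qed
qed

lemma strict_sub_ord: "strict_arc u s s' \<Longrightarrow> ordinal_arc u s s'"
  unfolding strict_arc_def ordinal_arc_def by force

lemma sink_reach: "(\<And>s'. \<not> E a s') \<Longrightarrow> E\<^sup>*\<^sup>* a s \<Longrightarrow> s = a"
  by (metis converse_rtranclpE)

lemma max_char:
  assumes sink: "\<And>s'. \<not> E a s'" and reach: "\<And>s. E\<^sup>*\<^sup>* s a"
  shows "{s. maximal_in E s} = {a}"
proof -
  have "maximal_in E s \<longleftrightarrow> s = a" for s
    unfolding maximal_in_def gt_in_def geq_in_def
    using sink_reach[of E a, OF sink] reach by blast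
  then show ?thesis by auto
qed

theorem theorem6:
  fixes c :: real and f :: "'i::finite \<Rightarrow> 'i set \<Rightarrow> real"
    and \<pi> R :: "'i \<Rightarrow> real"
  assumes "stag_hunt c f"
    and "insurance_params c f \<pi> R"
  shows "{s. weakly_maximal (ins_payoff c f \<pi> R) s} = {(\<lambda>_. A)}
     \<and> {s. strongly_maximal (ins_payoff c f \<pi> R) s} = {(\<lambda>_. A)}
     \<and> weakly_acyclic (ins_payoff c f \<pi> R)"
proof -
  let ?u = "ins_payoff c f \<pi> R"
  have r1: "(strict_arc ?u)\<^sup>*\<^sup>* s (\<lambda>_. A)" for s using reach_A[OF assms(2)] .
  have r2: "(ordinal_arc ?u)\<^sup>*\<^sup>* s (\<lambda>_. A)" for s
    using r1[of s] by (rule rtranclp_mono[THEN predicate2D, rotated]) (auto intro: strict_sub_ord)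
  have w: "{s. weakly_maximal ?u s} = {(\<lambda>_. A)}"
    unfolding weakly_maximal_def using max_char[OF no_arc_strict[OF assms] r1] .
  have st: "{s. strongly_maximal ?u s} = {(\<lambda>_. A)}"
    unfolding strongly_maximal_def using max_char[OF no_arc_ord[OF assms] r2] .
  have "pure_nash ?u (\<lambda>_. A)"
    unfolding pure_nash_def
  proof (intro allI)
    fix i b show "?u ((\<lambda>_. A)(i := b)) i \<le> ?u (\<lambda>_. A) i"
      using A_payoffs[OF assms, of b i] by (cases "b = A") auto
  qed
  moreover have "s = (\<lambda>_. A)" if "weakly_maximal ?u s" for s
  proof -
    have "s \<in> {s. weakly_maximal ?u s}" using that by simp
    then show ?thesis using w by simp
  qed
  ultimately have "weakly_acyclic ?u" unfolding weakly_acyclic_def by blast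
  then show ?thesis using w st by blast
qed

end
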